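(* Let $S$ be a nonempty set of primes and $(a_n(q))_{n\ge1}$ a sequence in $\mathbb{Z}[q]$. Then $a_{p^rm}(q)\equiv a_{p^{r-1}m}(q^p)\pmod{[p^r]_{q^m}}$ holds for all primes $p\in S$ and all integers $m,r\ge1$ with $p\nmid m$ if and only if $\sum_{d\mid n}\mu(d)\,a_{nm/d}(q^d)\equiv0\pmod{[n]_{q^m}}$ for all integers $n\ge1$ divisible only by primes from $S$ and all integers $m\ge1$ coprime to $n$.
   Context: $\mu$ is the Möbius function and $[n]_{q^m}=1+q^m+q^{2m}+\dots+q^{m(n-1)}$; polynomial congruences modulo such polynomials mean divisibility of the difference in $\mathbb{Z}[q]$. *)

theory Defs
  imports "HOL-Computational_Algebra.Computational_Algebra"
begin

definition moebius :: "nat \<Rightarrow> int" where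
  "moebius n = (if squarefree n then (-1) ^ card (prime_factors n) else 0)"

definition subst_pow :: "int poly \<Rightarrow> nat \<Rightarrow> int poly" where
  "subst_pow f k = pcompose f (monom 1 k)"

definition qint :: "nat \<Rightarrow> nat \<Rightarrow> int poly" where
  "qint n m = (\<Sum>i<n. monom 1 (m * i))"

end

theory Submission imports Defs begin

abbreviation xp :: "nat \<Rightarrow> int poly" where "xp k \<equiv> monom 1 k - 1"

lemma qint_Suc: "qint (Suc n) m = qint n m + monom 1 (m*n)"
  by (simp add: qint_def)

lemma qint_tele: "qint n m * xp m = xp (n*m)"
proof (induction n)
  case 0 then show ?case by (simp add: qint_def)
next
  case (Suc n)
  have "qint (Suc n) m * xp m = xp (n*m) + monom 1 (m*n) * xp m"
    using Suc by (simp add: qint_Suc algebra_simps)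
  also have "\<dots> = xp (Suc n * m)"
    by (simp add: algebra_simps mult_monom)
  finally show ?case .
qed

lemma qint_1 [simp]: "qint 1 m = 1" by (simp add: qint_def)

lemma xp_dvd: "xp k dvd xp (j*k)"
  using qint_tele[of j k] by (metis dvd_triv_right)

lemma subst_pow_monom: "subst_pow (monom c j) k = monom c (j*k)"
proof -
  have "poly (pcompose (monom c j) (monom 1 k)) = poly (monom c (j*k))"
    by (rule ext) (simp add: poly_pcompose poly_monom flip: power_mult, simp add: mult.commute)
  then show ?thesis unfolding subst_pow_def using poly_eq_poly_eq_iff by blast
qed

lemma subst_pow_1 [simp]: "subst_pow f 1 = f"
  by (simp add: subst_pow_def monom_altdef)

lemma subst_pow_mult: "subst_pow (f*g) k = subst_pow f k * subst_pow g k"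
  by (simp add: subst_pow_def pcompose_mult)
lemma subst_pow_diff: "subst_pow (f-g) k = subst_pow f k - subst_pow g k"
  by (simp add: subst_pow_def pcompose_diff)
lemma subst_pow_smult: "subst_pow (smult c f) k = smult c (subst_pow f k)"
  by (simp add: subst_pow_def pcompose_smult)
lemma subst_pow_sum: "subst_pow (sum f A) k = (\<Sum>i\<in>A. subst_pow (f i) k)"
  by (simp add: subst_pow_def pcompose_sum)
lemma subst_pow_subst_pow: "subst_pow (subst_pow f a) b = subst_pow f (a*b)"
proof -
  have "pcompose (monom 1 a) (monom 1 b) = (monom 1 (a*b) :: int poly)"
    using subst_pow_monom[of 1 a b] by (simp add: subst_pow_def)
  then show ?thesis by (simp add: subst_pow_def flip: pcompose_assoc)
qed
lemma subst_pow_dvd: "f dvd g \<Longrightarrow> subst_pow f k dvd subst_pow g k"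
  by (metis dvd_def subst_pow_mult)
lemma subst_pow_qint: "subst_pow (qint n m) k = qint n (m*k)"
  by (simp add: qint_def subst_pow_sum subst_pow_monom mult_ac)

lemma xp_gcd:
  assumes "h dvd xp a" "h dvd xp b" "a \<noteq> 0"
  shows "h dvd xp (gcd a b)"
proof -
  obtain u v where uv: "a*u = b*v + gcd a b" using bezout_nat[OF assms(3), of b] by blast
  have "h dvd xp (u*a)" using assms(1) xp_dvd dvd_trans by blast
  moreover have "h dvd xp (v*b)" using assms(2) xp_dvd dvd_trans by blast
  ultimately have "h dvd xp (u*a) - monom 1 (gcd a b) * xp (v*b)" by simp
  also have "xp (u*a) - monom 1 (gcd a b) * xp (v*b) = xp (gcd a b)"
    using uv by (simp add: algebra_simps mult_monom)
  finally show ?thesis .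
qed

lemma xp_nz: "m \<ge> 1 \<Longrightarrow> xp m \<noteq> 0"
proof
  assume "m \<ge> 1" "xp m = 0"
  then have "coeff (monom (1::int) m) 0 = coeff 1 0" by simp
  with \<open>m \<ge> 1\<close> show False by (simp add: coeff_monom)
qed

lemma comb:
  fixes F :: "int poly"
  assumes "qint n' (P*m) dvd F" "qint P (n'*m) dvd F" "coprime P n'" "m\<ge>1" "P \<ge> 1"
  shows "qint (P*n') m dvd F"
proof -
  define X where "X = xp (P*n'*m)"
  have X1: "X = qint n' (P*m) * xp (P*m)" unfolding X_def qint_tele by (simp add: mult_ac)
  have X2: "X = qint P (n'*m) * xp (n'*m)" unfolding X_def qint_tele by (simp add: mult_ac)
  have "X dvd F * xp (P*m)" using assms(1) X1 by (simp add: mult_dvd_mono)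
  moreover have "X dvd F * xp (n'*m)" using assms(2) X2 by (simp add: mult_dvd_mono)
  ultimately have "X dvd gcd (F * xp (P*m)) (F * xp (n'*m))" by simp
  also have "\<dots> = normalize F * gcd (xp (P*m)) (xp (n'*m))" by (rule gcd_mult_distrib'[symmetric])
  also have "\<dots> dvd normalize F * xp (gcd (P*m) (n'*m))"
    by (rule mult_dvd_mono[OF dvd_refl xp_gcd]) (use assms in auto)
  also have "gcd (P*m) (n'*m) = m"
    using assms(3) by (metis gcd_mult_distrib_nat coprime_iff_gcd_eq_1 mult.commute nat_mult_1_right)
  finally have "X dvd normalize F * xp m" by simp
  moreover have "normalize F * xp m dvd F * xp m" by (rule mult_dvd_mono) simp_all
  ultimately have "X dvd F * xp m" by (rule dvd_trans)
  also have "X = qint (P*n') m * xp m" unfolding X_def qint_tele by simp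
  finally show ?thesis using xp_nz[OF assms(4)] by simp
qed

lemma moebius_1 [simp]: "moebius 1 = 1" by (simp add: moebius_def)

lemma moebius_sq: "prime p \<Longrightarrow> p*p dvd d \<Longrightarrow> moebius d = 0"
  unfolding moebius_def squarefree_def
  by (auto simp: power2_eq_square)

lemma moebius_pe:
  assumes "prime p" "\<not> p dvd e" "e > 0"
  shows "moebius (p*e) = - moebius e"
proof -
  have cop: "coprime p e" using assms prime_imp_coprime by blast
  have sq: "squarefree (p*e) \<longleftrightarrow> squarefree e"
    using squarefree_mult_coprime[OF cop] squarefree_prime_elem[of p] assms(1) squarefree_multD by auto
  have pf: "prime_factors (p*e) = insert p (prime_factors e)"
    using prime_factors_product[of p e] prime_prime_factors[OF assms(1)] assms
    by (auto simp: prime_gt_0_nat)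
  have "p \<notin> prime_factors e" using assms(2) by auto
  then have "card (prime_factors (p*e)) = Suc (card (prime_factors e))" unfolding pf by simp
  then show ?thesis unfolding moebius_def using sq by simp
qed

lemma divsum_split:
  fixes F :: "nat \<Rightarrow> int poly"
  assumes p: "prime p" and np: "\<not> p dvd n'" and r: "r \<ge> 1" and n': "n' \<ge> 1"
  shows "(\<Sum>d | d dvd p^r*n'. smult (moebius d) (F d)) = (\<Sum>e | e dvd n'. smult (moebius e) (F e - F (p*e)))"
proof -
  define N where "N = p^r*n'"
  have p0: "p > 0" using p prime_gt_0_nat by blast
  have N0: "N > 0" unfolding N_def using p0 n' by simp
  have fin: "finite {d. d dvd N}" using N0 by simp
  have finn: "finite {e. e dvd n'}" using n' by simp
  define g where "g d = smult (moebius d) (F d)" for d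
  have spl: "{d. d dvd N} = {d. d dvd N \<and> \<not> p dvd d} \<union> {d. d dvd N \<and> p dvd d}" by auto
  have "(\<Sum>d | d dvd N. g d) = (\<Sum>d | d dvd N \<and> \<not> p dvd d. g d) + (\<Sum>d | d dvd N \<and> p dvd d. g d)"
    by (subst spl, rule sum.union_disjoint) (use fin in auto)
  also have A: "{d. d dvd N \<and> \<not> p dvd d} = {e. e dvd n'}"
  proof safe
    fix d assume "d dvd N" "\<not> p dvd d"
    then have "coprime d (p^r)" using prime_imp_coprime[OF p \<open>\<not> p dvd d\<close>] by (simp add: coprime_commute)
    then show "d dvd n'" using \<open>d dvd N\<close> unfolding N_def using coprime_dvd_mult_right_iff by blast
  next
    fix d assume "d dvd n'" then show "d dvd N" unfolding N_def by simp
  next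
    fix d assume "d dvd n'" "p dvd d" then show False using np dvd_trans by blast
  qed
  also have "(\<Sum>d | d dvd N \<and> p dvd d. g d) = (\<Sum>d \<in> (\<lambda>e. p*e) ` {e. e dvd n'}. g d)"
  proof (rule sum.mono_neutral_right)
    show "finite {d. d dvd N \<and> p dvd d}" using fin by simp
    have "p dvd p^r" using r by (simp add: dvd_power)
    then show "(\<lambda>e. p*e) ` {e. e dvd n'} \<subseteq> {d. d dvd N \<and> p dvd d}"
      unfolding N_def by (auto intro: mult_dvd_mono)
    show "\<forall>i\<in>{d. d dvd N \<and> p dvd d} - (\<lambda>e. p*e) ` {e. e dvd n'}. g i = 0"
    proof
      fix d assume d: "d \<in> {d. d dvd N \<and> p dvd d} - (\<lambda>e. p*e) ` {e. e dvd n'}"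
      then obtain k where k: "d = p*k" by auto
      show "g d = 0"
      proof (cases "p dvd k")
        case True
        then have "p*p dvd d" using k by simp
        then show ?thesis unfolding g_def using moebius_sq[OF p] by simp
      next
        case False
        have "N = p * (p^(r-1)*n')" unfolding N_def using r
          by (metis mult.assoc power_eq_if not_one_le_zero)
        then have "k dvd p^(r-1)*n'" using d k p0 by auto
        moreover have "coprime k (p^(r-1))" using prime_imp_coprime[OF p False] by (simp add: coprime_commute)
        ultimately have "k dvd n'" using coprime_dvd_mult_right_iff by blast
        then show ?thesis using d k by auto
      qed
    qed
  qed
  also have "\<dots> = (\<Sum>e | e dvd n'. g (p*e))"
    by (rule sum.reindex_cong[where l="\<lambda>e. p*e"]) (use p0 in \<open>auto simp: inj_on_def\<close>)
  also have "\<dots> = (\<Sum>e | e dvd n'. - smult (moebius e) (F (p*e)))"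
  proof (rule sum.cong)
    fix e assume "e \<in> {e. e dvd n'}"
    then have "\<not> p dvd e" "e > 0" using np n' dvd_trans by auto
    then show "g (p*e) = - smult (moebius e) (F (p*e))" unfolding g_def using moebius_pe[OF p] by simp
  qed simp
  finally show ?thesis unfolding N_def g_def
    by (simp add: smult_diff_right sum_subtractf sum_negf)
qed

lemma dir_BA:
  fixes a :: "nat \<Rightarrow> int poly"
  assumes p: "prime p" and m: "m \<ge> 1" and r: "r \<ge> 1" and pm: "\<not> p dvd m"
  and B: "qint (p^r) m dvd (\<Sum>d | d dvd p^r. smult (moebius d) (subst_pow (a (p^r * m div d)) d))"
  shows "qint (p ^ r) m dvd (a (p ^ r * m) - subst_pow (a (p ^ (r - 1) * m)) p)"
proof -
  have "(\<Sum>d | d dvd p^r*1. smult (moebius d) (subst_pow (a (p^r * m div d)) d))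
     = (\<Sum>e | e dvd 1. smult (moebius e) (subst_pow (a (p^r * m div e)) e - subst_pow (a (p^r * m div (p*e))) (p*e)))"
    by (rule divsum_split[OF p _ r]) (use p in auto)
  also have "{e::nat. e dvd 1} = {1}" by auto
  finally have eq: "(\<Sum>d | d dvd p^r. smult (moebius d) (subst_pow (a (p^r * m div d)) d))
     = a (p^r*m) - subst_pow (a (p^r * m div p)) p" by (simp del: One_nat_def)
  have "p^r*m div p = p^(r-1)*m" using r p prime_gt_0_nat
    by (metis (no_types, lifting) mult.assoc nonzero_mult_div_cancel_left not_gr_zero power_eq_if not_one_le_zero)
  then show ?thesis using B eq by simp
qed

lemma dir_AB:
  fixes a :: "nat \<Rightarrow> int poly" and S :: "nat set"
  assumes A: "\<forall>p\<in>S. \<forall>m r. m \<ge> 1 \<longrightarrow> r \<ge> 1 \<longrightarrow> \<not> p dvd m \<longrightarrow>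
            qint (p ^ r) m dvd (a (p ^ r * m) - subst_pow (a (p ^ (r - 1) * m)) p)"
  and SP: "\<forall>p\<in>S. prime p"
  shows "n \<ge> 1 \<Longrightarrow> (\<forall>p. prime p \<longrightarrow> p dvd n \<longrightarrow> p \<in> S) \<Longrightarrow> m \<ge> 1 \<Longrightarrow> coprime m n \<Longrightarrow>
            qint n m dvd (\<Sum>d | d dvd n. smult (moebius d) (subst_pow (a (n * m div d)) d))"
proof (induction n arbitrary: m rule: less_induct)
  case (less n)
  show ?case
  proof (cases "n = 1")
    case True then show ?thesis by (simp del: One_nat_def)
  next
    case False
    with less.prems obtain p where p: "prime p" "p dvd n" by (metis prime_factor_nat)
    have pS: "p \<in> S" using less.prems p by blast
    define r where "r = multiplicity p n"
    define n' where "n' = n div p^r"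
    have n0: "n \<noteq> 0" using less.prems by auto
    have nn: "n = p^r * n'" unfolding n'_def r_def using multiplicity_dvd[of p n] by simp
    have np: "\<not> p dvd n'" unfolding n'_def r_def using multiplicity_decompose[of n p] n0 p(1) not_prime_unit by blast
    have r1: "r \<ge> 1" unfolding r_def using p n0
      by (metis One_nat_def Suc_leI not_prime_unit multiplicity_eq_zero_iff not_gr_zero)
    have n'1: "n' \<ge> 1" using nn n0 by (cases n') auto
    have p0: "p > 1" using p prime_gt_1_nat by blast
    have pr: "p^r = p * p^(r-1)" using r1 by (cases r) auto
    have "p^r > 1" using p0 r1 by (intro one_less_power) auto
    then have n'lt: "n' < n" using nn n'1 by simp
    have n'S: "\<forall>q. prime q \<longrightarrow> q dvd n' \<longrightarrow> q \<in> S" using less.prems nn by auto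
    have cmn': "coprime m n'" using less.prems(4) nn by simp
    have cpn': "coprime p n'" using prime_imp_coprime[OF p(1) np] .
    have pm: "\<not> p dvd m" using less.prems(4) p(2) p(1)
      by (metis coprime_common_divisor not_prime_unit)
    define F where "F d = subst_pow (a (n * m div d)) d" for d
    have split: "(\<Sum>d | d dvd n. smult (moebius d) (F d)) = (\<Sum>e | e dvd n'. smult (moebius e) (F e - F (p*e)))"
      unfolding nn by (rule divsum_split[OF p(1) np r1 n'1])
    define T where "T = (\<Sum>e | e dvd n'. smult (moebius e) (F e - F (p*e)))"
    have IH1: "qint n' (p^r*m) dvd (\<Sum>d | d dvd n'. smult (moebius d) (subst_pow (a (n' * (p^r*m) div d)) d))"
    proof (rule less.IH[OF n'lt n'1 n'S])
      show "p^r*m \<ge> 1" using p0 less.prems(3) by (simp add: Suc_le_eq)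
      show "coprime (p^r*m) n'" using cmn' cpn' by (simp add: coprime_power_left_iff)
    qed
    have IH2: "qint n' (p^(r-1)*m) dvd (\<Sum>d | d dvd n'. smult (moebius d) (subst_pow (a (n' * (p^(r-1)*m) div d)) d))"
    proof (rule less.IH[OF n'lt n'1 n'S])
      show "p^(r-1)*m \<ge> 1" using p0 less.prems(3) by (simp add: Suc_le_eq)
      show "coprime (p^(r-1)*m) n'" using cmn' cpn' by (simp add: coprime_power_left_iff)
    qed
    have IH2': "qint n' (p^r*m) dvd (\<Sum>d | d dvd n'. smult (moebius d) (subst_pow (a (n' * (p^(r-1)*m) div d)) (d*p)))"
    proof -
      have "subst_pow (qint n' (p^(r-1)*m)) p = qint n' (p^r*m)"
        using r1 by (simp add: subst_pow_qint mult_ac power_eq_if)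
      moreover note subst_pow_dvd[OF IH2, of p]
      ultimately show ?thesis by (simp add: subst_pow_sum subst_pow_smult subst_pow_subst_pow)
    qed
    have Teq1: "T = (\<Sum>d | d dvd n'. smult (moebius d) (subst_pow (a (n' * (p^r*m) div d)) d))
       - (\<Sum>d | d dvd n'. smult (moebius d) (subst_pow (a (n' * (p^(r-1)*m) div d)) (d*p)))"
      unfolding T_def smult_diff_right sum_subtractf[symmetric]
    proof (rule sum.cong)
      fix e assume "e \<in> {e. e dvd n'}"
      then obtain c where c: "n' = e*c" by auto
      have e0: "e > 0" using c n'1 by (cases e) auto
      have 1: "n * m div e = n' * (p^r*m) div e" unfolding nn by (simp add: mult_ac)
      have eq: "n * m = (p*e) * (p^(r-1) * c * m)" unfolding nn c pr by (simp add: mult_ac)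
      have "n * m div (p*e) = p^(r-1) * c * m" by (subst eq) (use p0 e0 in simp)
      also have "\<dots> = n' * (p^(r-1)*m) div e" unfolding c using e0 by (simp add: mult_ac)
      finally have 2: "n * m div (p*e) = n' * (p^(r-1)*m) div e" .
      show "smult (moebius e) (F e) - smult (moebius e) (F (p*e)) =
         smult (moebius e) (subst_pow (a (n' * (p^r*m) div e)) e) -
         smult (moebius e) (subst_pow (a (n' * (p^(r-1)*m) div e)) (e*p))"
        unfolding F_def 1 2 by (simp add: mult.commute)
    qed simp
    have D1: "qint n' (p^r*m) dvd T" unfolding Teq1 using IH1 IH2' by (rule dvd_diff)
    have D2: "qint (p^r) (n'*m) dvd T" unfolding T_def
    proof (rule dvd_sum)
      fix e assume "e \<in> {e. e dvd n'}"
      then obtain c where c: "n' = e*c" by auto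
      have e0: "e > 0" using c n'1 by (cases e) auto
      have c0: "c > 0" using c n'1 by (cases c) auto
      have pc: "\<not> p dvd c*m" using np pm c p(1) by (metis dvd_mult2 prime_dvd_mult_iff)
      have Ae: "qint (p^r) (c*m) dvd (a (p^r*(c*m)) - subst_pow (a (p^(r-1)*(c*m))) p)"
        using A pS r1 pc less.prems(3) c0 by (simp add: Suc_leI)
      have "subst_pow (a (p^r*(c*m)) - subst_pow (a (p^(r-1)*(c*m))) p) e = F e - F (p*e)"
      proof -
        have 1: "n * m div e = p^r*(c*m)" unfolding nn c using e0 by (simp add: mult_ac)
        have eq: "n * m = (p*e) * (p^(r-1) * (c * m))" unfolding nn c pr by (simp add: mult_ac)
        have "n * m div (p*e) = p^(r-1) * (c * m)" by (subst eq) (use p0 e0 in simp)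
        then show ?thesis unfolding F_def 1 by (simp add: subst_pow_diff subst_pow_subst_pow)
      qed
      moreover have "subst_pow (qint (p^r) (c*m)) e = qint (p^r) (n'*m)"
        unfolding c by (simp add: subst_pow_qint mult_ac)
      ultimately have "qint (p^r) (n'*m) dvd F e - F (p*e)" using subst_pow_dvd[OF Ae, of e] by simp
      then show "qint (p^r) (n'*m) dvd smult (moebius e) (F e - F (p*e))"
        by (rule dvd_smult)
    qed
    have "qint (p^r*n') m dvd T"
      by (rule comb[OF D1 D2]) (use cpn' less.prems p0 in \<open>auto simp: coprime_power_left_iff\<close>)
    then show ?thesis using split unfolding T_def F_def nn by simp
  qed
qed

theorem theorem8:
  fixes S :: "nat set" and a :: "nat \<Rightarrow> int poly"
  assumes "S \<noteq> {}" and "\<forall>p\<in>S. prime p"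
  shows "(\<forall>p\<in>S. \<forall>m r. m \<ge> 1 \<longrightarrow> r \<ge> 1 \<longrightarrow> \<not> p dvd m \<longrightarrow>
            qint (p ^ r) m dvd (a (p ^ r * m) - subst_pow (a (p ^ (r - 1) * m)) p))
    \<longleftrightarrow>
         (\<forall>n m. n \<ge> 1 \<longrightarrow> (\<forall>p. prime p \<longrightarrow> p dvd n \<longrightarrow> p \<in> S) \<longrightarrow> m \<ge> 1 \<longrightarrow> coprime m n \<longrightarrow>
            qint n m dvd (\<Sum>d | d dvd n. smult (moebius d) (subst_pow (a (n * m div d)) d)))"
  (is "?L \<longleftrightarrow> ?R")
proof
  assume A: ?L
  show ?R using dir_AB[OF A assms(2)] by blast
next
  assume B: ?R
  show ?L
  proof (intro ballI allI impI)
    fix p m r assume pS: "p \<in> S" and m: "m \<ge> (1::nat)" and r: "r \<ge> (1::nat)" and pm: "\<not> p dvd m"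
    have p: "prime p" using pS assms(2) by blast
    have "\<forall>q. prime q \<longrightarrow> q dvd p^r \<longrightarrow> q \<in> S"
      using p pS by (metis prime_dvd_power_nat primes_dvd_imp_eq)
    moreover have "coprime m (p^r)" using prime_imp_coprime[OF p pm] r
      by (simp add: coprime_commute)
    moreover have "p^r \<ge> 1" using p prime_gt_0_nat by (simp add: Suc_leI)
    ultimately have "qint (p^r) m dvd (\<Sum>d | d dvd p^r. smult (moebius d) (subst_pow (a (p^r * m div d)) d))"
      using B m by blast
    then show "qint (p ^ r) m dvd (a (p ^ r * m) - subst_pow (a (p ^ (r - 1) * m)) p)"
      by (rule dir_BA[OF p m r pm])
  qed
qed
end
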